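(* Let $x\in\tilde W$ lie in the shrunken Weyl chambers, i.e. $k(a,x\mathbf a)\neq k(a,\mathbf a)$ for all $a\in\Sigma$. If $x\mathbf a$ is a $(J,w,\delta)$-alcove for some $J\subseteq\mathbb S$ with $\delta(J)=J$ and some $w\in W$, then $\eta_\delta(x)\in W_J$.
   Context: Let $\Bbbk$ be an algebraic closure of a finite field $\mathbb F_q$. Either $F$ is a finite extension of $\mathbb Q_p$ with residue field $\mathbb F_q$ and $L$ the completion of its maximal unramified extension, or $F=\mathbb F_q((\epsilon))$, $L=\Bbbk((\epsilon))$; $\sigma$ the Frobenius of $L/F$. $G$ is a quasi-split connected semisimple group over $F$ splitting over a tamely ramified extension of $L$; $S$ a maximal $L$-split torus defined over $F$, $T$ its centralizer, $\Gamma=\mathrm{Gal}(\bar L/L)$, $\tilde W=N_S(L)/T(L)_1=X_*(T)_\Gamma\rtimes W$ the Iwahori–Weyl group; $\delta$ the automorphism of $\tilde W,W$ induced by $\sigma$. Fix a $\sigma$-stable base alcove $\mathbf a$. $V=X_*(T)_\Gamma\otimes\mathbb R$; $\Sigma$ the reduced root system with affine roots $v\mapsto\langle a,v\rangle+k$, $a\in\Sigma$, $k\in\mathbb Z$; $H_{a,k}=\{v:\langle a,v\rangle=k\}$; $W=W(\Sigma)$. The base alcove lies in the anti-dominant chamber; $\mathbb S$ the corresponding simple roots/simple reflections; $\Sigma^+$ positive roots; for $J\subset\mathbb S$, $\Sigma_J$ the roots spanned by $J$, $\Sigma_J^+=\Sigma_J\cap\Sigma^+$, $W_J$ parabolic subgroup,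 $\tilde W_J=X_*(T)_\Gamma\rtimes W_J$. For an alcove $\mathbf b$ and $a\in\Sigma$, $k(a,\mathbf b)$ is the unique integer $k$ such that $\mathbf b$ lies between $H_{a,k}$ and $H_{a,k-1}$. $x\mathbf a$ is a $(J,w,\delta)$-alcove if (1) $w^{-1}x\delta(w)\in\tilde W_J$ and (2) $k(a,x\mathbf a)\ge k(a,\mathbf a)$ for all $a\in w(\Sigma^+\setminus\Sigma^+_J)$ (equivalently, in group-theoretic terms, $\mathbf U_a(L)\cap xIx^{-1}\subseteq \mathbf U_a(L)\cap I$ for the root subgroups $\mathbf U_a$ of positive relative roots $a$ outside $\Phi_J$, translated by $w$, with $I$ the Iwahori of $\mathbf a$). $\eta_1:\tilde W\to W$ the projection, $\eta_2(x)$ the unique $v\in W$ with $v^{-1}x\mathbf a$ in the dominant chamber, $\eta_\delta(x)=\delta^{-1}(\eta_2(x)^{-1}\eta_1(x))\eta_2(x)$. *)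

theory Defs
  imports "HOL-Analysis.Analysis"
begin

text \<open>
  V is a real Euclidean space (type 'v), equipped with an inner product
  invariant under W and under sigma. Roots are identified with vectors via this
  inner product, so the pairing of a root a with v is a \<bullet> v.
\<close>

definition root_refl :: "'v::euclidean_space \<Rightarrow> 'v \<Rightarrow> 'v" where
  "root_refl a v = v - (2 * (a \<bullet> v) / (a \<bullet> a)) *\<^sub>R a"

definition coroot :: "'v::euclidean_space \<Rightarrow> 'v" where
  "coroot a = (2 / (a \<bullet> a)) *\<^sub>R a"

text \<open>Reduced crystallographic root system (finite, spanning V: G semisimple).\<close>
definition reduced_root_system :: "'v::euclidean_space set \<Rightarrow> bool" where
  "reduced_root_system Phi \<longleftrightarrow>
     finite Phi \<and> 0 \<notin> Phi \<and> span Phi = UNIV \<and>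
     (\<forall>a\<in>Phi. \<forall>b\<in>Phi. root_refl a b \<in> Phi) \<and>
     (\<forall>a\<in>Phi. \<forall>b\<in>Phi. 2 * (a \<bullet> b) / (a \<bullet> a) \<in> \<int>) \<and>
     (\<forall>a\<in>Phi. \<forall>c::real. c *\<^sub>R a \<in> Phi \<longrightarrow> c = 1 \<or> c = -1)"

text \<open>Group generated by the reflections s_a, a in R (as maps V to V).
  W = gen_group Phi, W_J = gen_group J.\<close>
inductive_set gen_group :: "'v::euclidean_space set \<Rightarrow> ('v \<Rightarrow> 'v) set" for R where
  gen_id: "id \<in> gen_group R"
| gen_step: "a \<in> R \<Longrightarrow> u \<in> gen_group R \<Longrightarrow> root_refl a \<circ> u \<in> gen_group R"

text \<open>xi: a regular vector in the anti-dominant chamber; it determines the positive roots.\<close>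
definition pos_roots :: "'v::euclidean_space set \<Rightarrow> 'v \<Rightarrow> 'v set" where
  "pos_roots Phi xi = {a \<in> Phi. a \<bullet> xi < 0}"

definition simple_roots :: "'v::euclidean_space set \<Rightarrow> 'v \<Rightarrow> 'v set" where
  "simple_roots Phi xi = {a \<in> pos_roots Phi xi.
      \<not> (\<exists>b\<in>pos_roots Phi xi. \<exists>c\<in>pos_roots Phi xi. a = b + c)}"

definition sub_roots :: "'v::euclidean_space set \<Rightarrow> 'v set \<Rightarrow> 'v set" where
  "sub_roots Phi J = Phi \<inter> span J"

definition dominant_chamber :: "'v::euclidean_space set \<Rightarrow> 'v \<Rightarrow> 'v set" where
  "dominant_chamber Phi xi = {v. \<forall>a\<in>pos_roots Phi xi. a \<bullet> v > 0}"

definition base_alcove :: "'v::euclidean_space set \<Rightarrow> 'v \<Rightarrow> 'v set" where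
  "base_alcove Phi xi = {v. \<forall>a\<in>pos_roots Phi xi. -1 < a \<bullet> v \<and> a \<bullet> v < 0}"

definition kval :: "'v::euclidean_space \<Rightarrow> 'v set \<Rightarrow> int" where
  "kval a B = (THE k::int. \<forall>v\<in>B. of_int k - 1 < a \<bullet> v \<and> a \<bullet> v < of_int k)"

text \<open>Translation lattice X (image of X_*(T)_Gamma in V): a W-stable subgroup
  between the coroot lattice and the coweight lattice.\<close>
definition translation_lattice :: "'v::euclidean_space set \<Rightarrow> 'v set \<Rightarrow> bool" where
  "translation_lattice Phi X \<longleftrightarrow>
     0 \<in> X \<and> (\<forall>l\<in>X. \<forall>m\<in>X. l + m \<in> X \<and> l - m \<in> X) \<and>
     (\<forall>u\<in>gen_group Phi. \<forall>l\<in>X. u l \<in> X) \<and>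
     (\<forall>a\<in>Phi. coroot a \<in> X) \<and>
     (\<forall>l\<in>X. \<forall>a\<in>Phi. a \<bullet> l \<in> \<int>)"

text \<open>Iwahori-Weyl group X \<rtimes> W: the pair (l,u) acts by v \<mapsto> l + u v.\<close>
type_synonym 'v iw = "'v \<times> ('v \<Rightarrow> 'v)"

definition IW :: "'v::euclidean_space set \<Rightarrow> 'v set \<Rightarrow> 'v iw set" where
  "IW Phi X = {(l, u). l \<in> X \<and> u \<in> gen_group Phi}"

definition IW_J :: "'v::euclidean_space set \<Rightarrow> 'v set \<Rightarrow> 'v iw set" where
  "IW_J J X = {(l, u). l \<in> X \<and> u \<in> gen_group J}"

definition iw_act :: "'v::euclidean_space iw \<Rightarrow> 'v \<Rightarrow> 'v" where
  "iw_act x v = fst x + snd x v"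

definition iw_mult :: "'v::euclidean_space iw \<Rightarrow> 'v iw \<Rightarrow> 'v iw" where
  "iw_mult x y = (fst x + snd x (fst y), snd x \<circ> snd y)"

text \<open>delta, induced by the Frobenius sigma acting on V.\<close>
definition delta_W :: "('v \<Rightarrow> 'v) \<Rightarrow> ('v \<Rightarrow> 'v) \<Rightarrow> ('v \<Rightarrow> 'v)" where
  "delta_W sig u = sig \<circ> u \<circ> inv sig"

definition delta_W_inv :: "('v \<Rightarrow> 'v) \<Rightarrow> ('v \<Rightarrow> 'v) \<Rightarrow> ('v \<Rightarrow> 'v)" where
  "delta_W_inv sig u = inv sig \<circ> u \<circ> sig"

definition delta_IW :: "('v \<Rightarrow> 'v) \<Rightarrow> 'v iw \<Rightarrow> 'v iw" where
  "delta_IW sig x = (sig (fst x), delta_W sig (snd x))"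

definition eta1 :: "'v::euclidean_space iw \<Rightarrow> ('v \<Rightarrow> 'v)" where
  "eta1 x = snd x"

definition eta2 :: "'v::euclidean_space set \<Rightarrow> 'v \<Rightarrow> 'v iw \<Rightarrow> ('v \<Rightarrow> 'v)" where
  "eta2 Phi xi x = (THE v. v \<in> gen_group Phi \<and>
      inv v ` (iw_act x ` base_alcove Phi xi) \<subseteq> dominant_chamber Phi xi)"

definition eta_delta :: "'v::euclidean_space set \<Rightarrow> 'v \<Rightarrow> ('v \<Rightarrow> 'v) \<Rightarrow> 'v iw \<Rightarrow> ('v \<Rightarrow> 'v)" where
  "eta_delta Phi xi sig x =
     delta_W_inv sig (inv (eta2 Phi xi x) \<circ> eta1 x) \<circ> eta2 Phi xi x"

definition JW_alcove :: "'v::euclidean_space set \<Rightarrow> 'v \<Rightarrow> 'v set \<Rightarrow> ('v \<Rightarrow> 'v)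
    \<Rightarrow> 'v set \<Rightarrow> ('v \<Rightarrow> 'v) \<Rightarrow> 'v iw \<Rightarrow> bool" where
  "JW_alcove Phi xi X sig J w x \<longleftrightarrow>
     iw_mult (iw_mult (0, inv w) x) (delta_IW sig (0, w)) \<in> IW_J J X \<and>
     (\<forall>a \<in> w ` (pos_roots Phi xi - (sub_roots Phi J \<inter> pos_roots Phi xi)).
        kval a (iw_act x ` base_alcove Phi xi) \<ge> kval a (base_alcove Phi xi))"

end

theory Submission
  imports Defs
begin


lemma rr_linear: "linear (root_refl a)"
  unfolding root_refl_def
  by (intro linear_compose_sub linear_ident) (auto intro!: linearI simp: inner_add_right inner_scaleR_right scaleR_add_left add_divide_distrib algebra_simps)

lemma rr_inner: "(a::'v::euclidean_space) \<noteq> 0 \<Longrightarrow> root_refl a v \<bullet> root_refl a w = v \<bullet> w"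
  unfolding root_refl_def
  by (simp add: inner_diff_left inner_diff_right inner_commute field_simps) 

lemma rr_orth: "(a::'v::euclidean_space) \<noteq> 0 \<Longrightarrow> orthogonal_transformation (root_refl a)"
  by (simp add: orthogonal_transformation_def rr_linear rr_inner)

lemma rr_invol: "(a::'v::euclidean_space) \<noteq> 0 \<Longrightarrow> root_refl a (root_refl a v) = v"
  unfolding root_refl_def
  by (simp add: inner_diff_right algebra_simps field_simps)

lemma rr_self: "(a::'v::euclidean_space) \<noteq> 0 \<Longrightarrow> root_refl a a = - a"
  unfolding root_refl_def by (simp add: algebra_simps scaleR_2)

lemma rr_neg: "root_refl (- a) = root_refl (a::'v::euclidean_space)"
  unfolding root_refl_def by (auto simp: fun_eq_iff)

lemma rr_conj: "orthogonal_transformation g \<Longrightarrow> g (root_refl a v) = root_refl (g a) (g v)"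
  unfolding root_refl_def orthogonal_transformation_def
  by (simp add: linear_diff linear_cmul)

lemma rr_adj: "(a::'v::euclidean_space) \<noteq> 0 \<Longrightarrow> root_refl a v \<bullet> w = v \<bullet> root_refl a w"
  by (metis rr_inner rr_invol)


lemma gg_comp: "u \<in> gen_group R \<Longrightarrow> v \<in> gen_group R \<Longrightarrow> u \<circ> v \<in> gen_group R"
  by (induction rule: gen_group.induct) (auto simp: comp_assoc intro: gen_group.intros)

lemma gg_gen: "a \<in> R \<Longrightarrow> root_refl a \<in> gen_group R"
  using gen_group.gen_step[OF _ gen_group.gen_id] by fastforce

lemma gg_mono: "u \<in> gen_group R \<Longrightarrow> R \<subseteq> R' \<Longrightarrow> u \<in> gen_group R'"
  by (induction rule: gen_group.induct) (auto intro: gen_group.intros)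

lemma gg_orth: "u \<in> gen_group R \<Longrightarrow> 0 \<notin> R \<Longrightarrow> orthogonal_transformation u"
  by (induction rule: gen_group.induct)
     (auto simp: id_def intro!: orthogonal_transformation_compose rr_orth)

lemma gg_inv_ex: "u \<in> gen_group R \<Longrightarrow> 0 \<notin> R \<Longrightarrow> \<exists>u'\<in>gen_group R. u' \<circ> u = id \<and> u \<circ> u' = id"
proof (induction rule: gen_group.induct)
  case gen_id then show ?case by (metis gen_group.gen_id id_comp)
next
  case (gen_step a u)
  then obtain u' where u': "u' \<in> gen_group R" "u' \<circ> u = id" "u \<circ> u' = id" using gen_step by blast
  have a0: "a \<noteq> 0" using gen_step by auto
  have "u' \<circ> root_refl a \<in> gen_group R" using u' gen_step gg_comp gg_gen by blast
  moreover have "(u' \<circ> root_refl a) \<circ> (root_refl a \<circ> u) = id"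
    using u' rr_invol[OF a0] by (auto simp: fun_eq_iff pointfree_idE)
  moreover have "(root_refl a \<circ> u) \<circ> (u' \<circ> root_refl a) = id"
    using u' rr_invol[OF a0] by (auto simp: fun_eq_iff pointfree_idE)
  ultimately show ?case by blast
qed

lemma gg_inv: "u \<in> gen_group R \<Longrightarrow> 0 \<notin> R \<Longrightarrow> inv u \<in> gen_group R"
  using gg_inv_ex inv_unique_comp by metis

lemma gg_bij: "u \<in> gen_group (R::'v::euclidean_space set) \<Longrightarrow> 0 \<notin> R \<Longrightarrow> bij u"
  using gg_orth orthogonal_transformation_bij by blast

lemma gg_conj:
  assumes "u \<in> gen_group J" "orthogonal_transformation g" "bij g" "g ` J = J"
  shows "g \<circ> u \<circ> inv g \<in> gen_group J"
  using assms(1)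
proof (induction rule: gen_group.induct)
  case gen_id
  have "g \<circ> id \<circ> inv g = id" using assms(3) by (simp add: fun_eq_iff bij_is_surj surj_f_inv_f)
  then show ?case by (metis gen_group.gen_id)
next
  case (gen_step a u)
  have "g \<circ> (root_refl a \<circ> u) \<circ> inv g = root_refl (g a) \<circ> (g \<circ> u \<circ> inv g)"
    using rr_conj[OF assms(2)] assms(3) by (auto simp: fun_eq_iff bij_inv_eq_iff)
  moreover have "g a \<in> J" using gen_step assms(4) by blast
  ultimately show ?case using gen_step by (metis gen_group.gen_step)
qed




locale rs =
  fixes Phi :: "'v::euclidean_space set" and xi :: 'v
  assumes rrs: "reduced_root_system Phi" and reg: "\<forall>a\<in>Phi. a \<bullet> xi \<noteq> 0"
begin

abbreviation "P \<equiv> pos_roots Phi xi"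
abbreviation "S \<equiv> simple_roots Phi xi"
abbreviation "W \<equiv> gen_group Phi"

lemma fin: "finite Phi" and nz: "0 \<notin> Phi"
  and rcl: "a \<in> Phi \<Longrightarrow> b \<in> Phi \<Longrightarrow> root_refl a b \<in> Phi"
  and integ: "a \<in> Phi \<Longrightarrow> b \<in> Phi \<Longrightarrow> 2 * (a \<bullet> b) / (a \<bullet> a) \<in> \<int>"
  and red: "a \<in> Phi \<Longrightarrow> c *\<^sub>R a \<in> Phi \<Longrightarrow> c = 1 \<or> c = -1"
  using rrs unfolding reduced_root_system_def by auto

lemma nz': "a \<in> Phi \<Longrightarrow> a \<noteq> 0" using nz by auto

lemma negr: "a \<in> Phi \<Longrightarrow> - a \<in> Phi"
  using rcl[of a a] rr_self nz' by force

lemma P_sub: "P \<subseteq> Phi" by (auto simp: pos_roots_def)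
lemma S_sub: "S \<subseteq> P" by (auto simp: simple_roots_def)
lemma finP: "finite P" using fin P_sub finite_subset by blast
lemma finS: "finite S" using finP S_sub finite_subset by blast

lemma inP: "a \<in> P \<longleftrightarrow> a \<in> Phi \<and> a \<bullet> xi < 0" by (simp add: pos_roots_def)

lemma posneg: "a \<in> Phi \<Longrightarrow> a \<notin> P \<Longrightarrow> - a \<in> P"
  using reg negr by (force simp: inP)

lemma notboth: "a \<in> P \<Longrightarrow> - a \<notin> P"
  by (simp add: inP)

lemma W_Phi: "u \<in> W \<Longrightarrow> a \<in> Phi \<Longrightarrow> u a \<in> Phi"
  by (induction arbitrary: a rule: gen_group.induct) (auto simp: rcl)

lemma W_orth: "u \<in> gen_group R \<Longrightarrow> R \<subseteq> Phi \<Longrightarrow> orthogonal_transformation u"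
  using gg_orth nz by blast

definition ht :: "'v \<Rightarrow> real" where "ht a = - (a \<bullet> xi)"

lemma ht_pos: "a \<in> P \<Longrightarrow> ht a > 0" by (simp add: ht_def inP)

lemma nonneg_comb:
  "a \<in> P \<Longrightarrow> \<exists>c. (\<forall>s\<in>S. c s \<ge> 0) \<and> a = (\<Sum>s\<in>S. c s *\<^sub>R s)"
proof (induction "card {b\<in>P. ht b < ht a}" arbitrary: a rule: less_induct)
  case less
  show ?case
  proof (cases "a \<in> S")
    case True
    show ?thesis
      by (rule exI[of _ "\<lambda>s. if s = a then 1 else 0"])
         (auto simp: True finS if_distrib[of "\<lambda>c. c *\<^sub>R _"] sum.delta cong: if_cong)
  next
    case False
    then obtain b c where bc: "b \<in> P" "c \<in> P" "a = b + c"
      using less.prems by (auto simp: simple_roots_def)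
    have hb: "ht b < ht a" and hc: "ht c < ht a"
      using bc ht_pos[of b] ht_pos[of c] by (auto simp: ht_def inner_add_left)
    have "{x\<in>P. ht x < ht b} \<subset> {x\<in>P. ht x < ht a}"
      using hb bc by auto
    then have 1: "card {x\<in>P. ht x < ht b} < card {x\<in>P. ht x < ht a}"
      by (simp add: finP psubset_card_mono)
    have "{x\<in>P. ht x < ht c} \<subset> {x\<in>P. ht x < ht a}"
      using hc bc by auto
    then have 2: "card {x\<in>P. ht x < ht c} < card {x\<in>P. ht x < ht a}"
      by (simp add: finP psubset_card_mono)
    obtain cb where cb: "\<forall>s\<in>S. cb s \<ge> 0" "b = (\<Sum>s\<in>S. cb s *\<^sub>R s)"
      using less.hyps[OF 1 bc(1)] by blast
    obtain cc where cc: "\<forall>s\<in>S. cc s \<ge> 0" "c = (\<Sum>s\<in>S. cc s *\<^sub>R s)"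
      using less.hyps[OF 2 bc(2)] by blast
    show ?thesis
      by (rule exI[of _ "\<lambda>s. cb s + cc s"])
         (simp add: cb cc bc scaleR_add_left sum.distrib)
  qed
qed


lemma S_notsum: "a \<in> S \<Longrightarrow> b \<in> P \<Longrightarrow> c \<in> P \<Longrightarrow> a \<noteq> b + c"
  by (auto simp: simple_roots_def)

lemma simple_obtuse:
  assumes a: "\<alpha> \<in> S" and b: "\<beta> \<in> S" and ne: "\<alpha> \<noteq> \<beta>"
  shows "\<alpha> \<bullet> \<beta> \<le> 0"
proof (rule ccontr)
  assume "\<not> \<alpha> \<bullet> \<beta> \<le> 0"
  then have pos: "\<alpha> \<bullet> \<beta> > 0" by simp
  have aP: "\<alpha> \<in> P" and bP: "\<beta> \<in> P" using a b S_sub by auto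
  have aPhi: "\<alpha> \<in> Phi" and bPhi: "\<beta> \<in> Phi" using aP bP P_sub by auto
  have a0: "\<alpha> \<noteq> 0" and b0: "\<beta> \<noteq> 0" using aPhi bPhi nz' by auto
  have "\<bar>\<alpha> \<bullet> \<beta>\<bar> \<noteq> norm \<alpha> * norm \<beta>"
  proof
    assume "\<bar>\<alpha> \<bullet> \<beta>\<bar> = norm \<alpha> * norm \<beta>"
    then have "norm \<alpha> *\<^sub>R \<beta> = norm \<beta> *\<^sub>R \<alpha> \<or> norm \<alpha> *\<^sub>R \<beta> = - norm \<beta> *\<^sub>R \<alpha>"
      using norm_cauchy_schwarz_abs_eq by blast
    moreover have "\<beta> = (1 / norm \<alpha>) *\<^sub>R (norm \<alpha> *\<^sub>R \<beta>)" using a0 by simp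
    ultimately obtain c where c: "\<beta> = c *\<^sub>R \<alpha>"
      by (metis scaleR_scaleR)
    then have "c = 1 \<or> c = -1" using red[OF aPhi] bPhi by simp
    then show False using c ne aP bP notboth by auto
  qed
  then have lt: "\<bar>\<alpha> \<bullet> \<beta>\<bar> < norm \<alpha> * norm \<beta>"
    using Cauchy_Schwarz_ineq2[of \<alpha> \<beta>] by linarith
  have sq: "(\<alpha> \<bullet> \<beta>)^2 < (\<alpha> \<bullet> \<alpha>) * (\<beta> \<bullet> \<beta>)"
  proof -
    have "(\<alpha> \<bullet> \<beta>)^2 = \<bar>\<alpha> \<bullet> \<beta>\<bar>^2" by simp
    also have "\<dots> < (norm \<alpha> * norm \<beta>)^2"
      using power_strict_mono[OF lt abs_ge_zero, of 2] by simp
    also have "\<dots> = (\<alpha> \<bullet> \<alpha>) * (\<beta> \<bullet> \<beta>)"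
      by (simp add: power_mult_distrib power2_norm_eq_inner)
    finally show ?thesis .
  qed
  have aa: "\<alpha> \<bullet> \<alpha> > 0" and bb: "\<beta> \<bullet> \<beta> > 0" using a0 b0 by auto
  obtain k1 :: int where k1: "2 * (\<alpha> \<bullet> \<beta>) / (\<alpha> \<bullet> \<alpha>) = of_int k1"
    using integ[OF aPhi bPhi] by (metis Ints_cases)
  obtain k2 :: int where k2: "2 * (\<beta> \<bullet> \<alpha>) / (\<beta> \<bullet> \<beta>) = of_int k2"
    using integ[OF bPhi aPhi] by (metis Ints_cases)
  have k1p: "k1 > 0" using k1 pos aa
    by (metis divide_pos_pos mult_pos_pos of_int_0_less_iff zero_less_numeral)
  have k2p: "k2 > 0" using k2 pos bb
    by (metis divide_pos_pos inner_commute mult_pos_pos of_int_0_less_iff zero_less_numeral)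
  have "of_int (k1 * k2) = 4 * (\<alpha> \<bullet> \<beta>)^2 / ((\<alpha> \<bullet> \<alpha>) * (\<beta> \<bullet> \<beta>))"
    using k1 k2 aa bb by (simp add: inner_commute power2_eq_square field_simps flip: k1 k2)
  also have "\<dots> < 4" using sq aa bb by (simp add: field_simps)
  finally have "real_of_int (k1 * k2) < real_of_int 4" by simp
  then have "k1 * k2 < 4" by (simp only: of_int_less_iff)
  then have k12: "k1 = 1 \<or> k2 = 1"
  proof -
    assume h: "k1 * k2 < 4"
    { assume "k1 \<ge> 2" "k2 \<ge> 2"
      then have "k1 * k2 \<ge> 2 * 2" by (intro mult_mono) auto
      with h have False by simp }
    then have "\<not> (k1 \<ge> 2 \<and> k2 \<ge> 2)" by blast
    then show ?thesis using k1p k2p by linarith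
  qed
  have dPhi: "\<alpha> - \<beta> \<in> Phi"
    using k12
  proof
    assume "k1 = 1"
    then have "root_refl \<alpha> \<beta> = \<beta> - \<alpha>"
      using k1 pos by (simp add: root_refl_def inner_commute)
    then have "\<beta> - \<alpha> \<in> Phi" using rcl[OF aPhi bPhi] by simp
    from negr[OF this] show ?thesis by simp
  next
    assume "k2 = 1"
    then have "root_refl \<beta> \<alpha> = \<alpha> - \<beta>"
      using k2 pos by (simp add: root_refl_def inner_commute)
    then show ?thesis using rcl[OF bPhi aPhi] by simp
  qed
  show False
  proof (cases "\<alpha> - \<beta> \<in> P")
    case True
    then show False using S_notsum[OF a bP True] by (simp add: algebra_simps)
  next
    case False
    then have "\<beta> - \<alpha> \<in> P" using posneg[OF dPhi] by simp
    then show False using S_notsum[OF b aP, of "\<beta> - \<alpha>"] by simp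
  qed
qed


lemma S_indep:
  assumes z: "(\<Sum>s\<in>S. u s *\<^sub>R s) = 0" and s: "s \<in> S"
  shows "u s = 0"
proof -
  define Pp where "Pp = {s\<in>S. u s > 0}"
  define Nn where "Nn = {s\<in>S. u s < 0}"
  have fP: "finite Pp" and fN: "finite Nn" using finS by (auto simp: Pp_def Nn_def)
  have split: "(\<Sum>s\<in>S. u s *\<^sub>R s) = (\<Sum>s\<in>Pp. u s *\<^sub>R s) + (\<Sum>s\<in>Nn. u s *\<^sub>R s)"
  proof -
    have "(\<Sum>s\<in>S. u s *\<^sub>R s) = (\<Sum>s\<in>S. (if u s > 0 then u s *\<^sub>R s else 0) + (if u s < 0 then u s *\<^sub>R s else 0))"
      by (rule sum.cong) auto
    also have "\<dots> = (\<Sum>s\<in>Pp. u s *\<^sub>R s) + (\<Sum>s\<in>Nn. u s *\<^sub>R s)"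
      by (simp add: sum.distrib Pp_def Nn_def sum.inter_filter finS)
    finally show ?thesis .
  qed
  define v where "v = (\<Sum>s\<in>Pp. u s *\<^sub>R s)"
  have v2: "v = (\<Sum>t\<in>Nn. (- u t) *\<^sub>R t)"
    using z split by (simp add: v_def sum_negf eq_neg_iff_add_eq_0)
  have "v \<bullet> v = (\<Sum>s\<in>Pp. u s *\<^sub>R s) \<bullet> (\<Sum>t\<in>Nn. (- u t) *\<^sub>R t)"
    using v_def v2 by metis
  also have "\<dots> = (\<Sum>s\<in>Pp. \<Sum>t\<in>Nn. (u s * (- u t)) * (s \<bullet> t))"
    by (simp only: inner_sum_left inner_sum_right inner_scaleR_left inner_scaleR_right sum_distrib_left,
        subst sum.swap, simp add: algebra_simps)
  also have "\<dots> \<le> 0"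
  proof (intro sum_nonpos)
    fix s' t assume "s' \<in> Pp" "t \<in> Nn"
    then have "s' \<in> S" "t \<in> S" "s' \<noteq> t" "u s' > 0" "- u t > 0" by (auto simp: Pp_def Nn_def)
    show "(u s' * (- u t)) * (s' \<bullet> t) \<le> 0"
    proof (rule mult_nonneg_nonpos)
      show "0 \<le> u s' * (- u t)" using \<open>u s' > 0\<close> \<open>- u t > 0\<close> by (metis less_imp_le mult_pos_pos)
      show "s' \<bullet> t \<le> 0" using simple_obtuse \<open>s' \<in> S\<close> \<open>t \<in> S\<close> \<open>s' \<noteq> t\<close> by blast
    qed
  qed
  finally have v0: "v = 0" by (metis inner_ge_zero inner_eq_zero_iff order_antisym)
  have ePp: "Pp = {}"
  proof (rule ccontr)
    assume ne: "Pp \<noteq> {}"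
    have "0 < (\<Sum>s\<in>Pp. u s * ht s)"
      using ne fP by (intro sum_pos) (auto simp: Pp_def intro!: mult_pos_pos ht_pos dest: S_sub[THEN subsetD])
    also have "(\<Sum>s\<in>Pp. u s * ht s) = - (v \<bullet> xi)"
      by (simp add: v_def ht_def inner_sum_left sum_negf)
    finally show False using v0 by simp
  qed
  have eNn: "Nn = {}"
  proof (rule ccontr)
    assume ne: "Nn \<noteq> {}"
    have "0 < (\<Sum>s\<in>Nn. (- u s) * ht s)"
      using ne fN by (intro sum_pos) (auto simp: Nn_def intro!: mult_neg_pos ht_pos dest: S_sub[THEN subsetD])
    also have "(\<Sum>s\<in>Nn. (- u s) * ht s) = - (v \<bullet> xi)"
      by (simp add: v2 ht_def inner_sum_left sum_negf)
    finally show False using v0 by simp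
  qed
  show ?thesis using ePp eNn s unfolding Pp_def Nn_def
    by (metis (mono_tags, lifting) empty_Collect_eq linorder_neqE_linordered_idom)
qed


lemma refl_pos:
  assumes al: "\<alpha> \<in> S" and a: "a \<in> P" and ne: "a \<noteq> \<alpha>"
  shows "root_refl \<alpha> a \<in> P"
proof (rule ccontr)
  assume nP: "root_refl \<alpha> a \<notin> P"
  have alP: "\<alpha> \<in> Phi" and aPhi: "a \<in> Phi" using al a S_sub P_sub by auto
  obtain c where c: "\<forall>s\<in>S. c s \<ge> 0" "a = (\<Sum>s\<in>S. c s *\<^sub>R s)" using nonneg_comb[OF a] by blast
  have "\<exists>\<beta>\<in>S. \<beta> \<noteq> \<alpha> \<and> c \<beta> > 0"
  proof (rule ccontr)
    assume "\<not> ?thesis"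
    then have z: "\<forall>\<beta>\<in>S. \<beta> \<noteq> \<alpha> \<longrightarrow> c \<beta> = 0" using c(1) by force
    have "a = (\<Sum>s\<in>S. if s = \<alpha> then c \<alpha> *\<^sub>R \<alpha> else 0)"
      unfolding c(2) by (rule sum.cong) (auto simp: z)
    also have "\<dots> = c \<alpha> *\<^sub>R \<alpha>" using al finS by simp
    finally have ac: "a = c \<alpha> *\<^sub>R \<alpha>" .
    then have "c \<alpha> = 1 \<or> c \<alpha> = -1" using red[OF alP] aPhi by simp
    moreover have "c \<alpha> \<ge> 0" using c(1) al by auto
    ultimately have "a = \<alpha>" using ac by auto
    then show False using ne by simp
  qed
  then obtain \<beta> where b: "\<beta> \<in> S" "\<beta> \<noteq> \<alpha>" "c \<beta> > 0" by blast
  have rPhi: "root_refl \<alpha> a \<in> Phi" using rcl[OF alP aPhi] .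
  then have "- root_refl \<alpha> a \<in> P" using posneg nP by blast
  then obtain d where d: "\<forall>s\<in>S. d s \<ge> 0" "- root_refl \<alpha> a = (\<Sum>s\<in>S. d s *\<^sub>R s)"
    using nonneg_comb by blast
  define k where "k = 2 * (\<alpha> \<bullet> a) / (\<alpha> \<bullet> \<alpha>)"
  have r: "root_refl \<alpha> a = a - k *\<^sub>R \<alpha>" by (simp add: root_refl_def k_def)
  have "(\<Sum>s\<in>S. (c s + d s - (if s = \<alpha> then k else 0)) *\<^sub>R s)
      = (\<Sum>s\<in>S. c s *\<^sub>R s) + (\<Sum>s\<in>S. d s *\<^sub>R s) - (\<Sum>s\<in>S. (if s = \<alpha> then k *\<^sub>R s else 0))"
    by (simp add: scaleR_add_left scaleR_diff_left sum.distrib sum_subtractf if_distrib[of "\<lambda>x. x *\<^sub>R _"] cong: if_cong)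
  also have "\<dots> = 0" using al finS by (simp add: c(2)[symmetric] d(2)[symmetric] r)
  finally have "c \<beta> + d \<beta> - (if \<beta> = \<alpha> then k else 0) = 0" by (rule S_indep[OF _ b(1)])
  then show False using b d(1) by auto
qed

lemma W_S: "b \<in> Phi \<Longrightarrow> root_refl b \<in> gen_group S"
proof -
  have main: "b \<in> P \<Longrightarrow> root_refl b \<in> gen_group S" for b
  proof (induction "card {x\<in>P. ht x < ht b}" arbitrary: b rule: less_induct)
    case less
    show ?case
    proof (cases "b \<in> S")
      case True then show ?thesis by (rule gg_gen)
    next
      case False
      obtain c where c: "\<forall>s\<in>S. c s \<ge> 0" "b = (\<Sum>s\<in>S. c s *\<^sub>R s)" using nonneg_comb[OF less.prems] by blast
      have bPhi: "b \<in> Phi" using less.prems P_sub by auto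
      have "0 < b \<bullet> b" using nz'[OF bPhi] by simp
      also have "b \<bullet> b = (\<Sum>s\<in>S. c s * (s \<bullet> b))"
        by (subst (1) c(2)) (simp add: inner_sum_left)
      finally have "\<exists>\<alpha>\<in>S. 0 < c \<alpha> * (\<alpha> \<bullet> b)"
      proof (rule contrapos_pp)
        assume "\<not> (\<exists>\<alpha>\<in>S. 0 < c \<alpha> * (\<alpha> \<bullet> b))"
        then have "(\<Sum>s\<in>S. c s * (s \<bullet> b)) \<le> 0" by (intro sum_nonpos) (auto simp: not_less)
        then show "\<not> 0 < (\<Sum>s\<in>S. c s * (s \<bullet> b))" by simp
      qed
      then obtain \<alpha> where al: "\<alpha> \<in> S" "0 < c \<alpha> * (\<alpha> \<bullet> b)" by blast
      have ab: "\<alpha> \<bullet> b > 0" using al c(1) by (auto simp: zero_less_mult_iff)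
      have alP: "\<alpha> \<in> P" using al S_sub by auto
      have alPhi: "\<alpha> \<in> Phi" using alP P_sub by auto
      have a0: "\<alpha> \<noteq> 0" using nz' alPhi by auto
      define b' where "b' = root_refl \<alpha> b"
      have b'P: "b' \<in> P" unfolding b'_def using refl_pos[OF al(1) less.prems] False al(1) by auto
      have "ht b' = ht b - (2 * (\<alpha> \<bullet> b) / (\<alpha> \<bullet> \<alpha>)) * ht \<alpha>"
        by (simp add: b'_def root_refl_def ht_def inner_diff_left algebra_simps)
      moreover have "(2 * (\<alpha> \<bullet> b) / (\<alpha> \<bullet> \<alpha>)) * ht \<alpha> > 0"
        using ab a0 ht_pos[OF alP] by simp
      ultimately have hlt: "ht b' < ht b" by simp
      have "{x\<in>P. ht x < ht b'} \<subset> {x\<in>P. ht x < ht b}" using hlt b'P by auto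
      then have "card {x\<in>P. ht x < ht b'} < card {x\<in>P. ht x < ht b}"
        by (simp add: finP psubset_card_mono)
      from less.hyps[OF this b'P] have ih: "root_refl b' \<in> gen_group S" .
      have "root_refl b = root_refl \<alpha> \<circ> root_refl b' \<circ> root_refl \<alpha>"
      proof
        fix v
        have "root_refl \<alpha> (root_refl b' (root_refl \<alpha> v)) = root_refl (root_refl \<alpha> b') (root_refl \<alpha> (root_refl \<alpha> v))"
          by (rule rr_conj[OF rr_orth[OF a0]])
        also have "\<dots> = root_refl b v" by (simp add: b'_def rr_invol[OF a0])
        finally show "root_refl b v = (root_refl \<alpha> \<circ> root_refl b' \<circ> root_refl \<alpha>) v" by simp
      qed
      then show ?thesis using ih al(1) by (simp add: gg_comp gg_gen)
    qed
  qed
  assume "b \<in> Phi"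
  then show ?thesis
  proof (cases "b \<in> P")
    case True then show ?thesis by (rule main)
  next
    case False
    then have "- b \<in> P" using posneg \<open>b \<in> Phi\<close> by blast
    then show ?thesis using main rr_neg by metis
  qed
qed

lemma W_sub: "u \<in> W \<Longrightarrow> u \<in> gen_group S"
proof (induction rule: gen_group.induct)
  case gen_id then show ?case by (rule gen_group.gen_id)
next
  case (gen_step a u) then show ?case using gg_comp[OF W_S] by blast
qed

end



definition wd :: "'v::euclidean_space list \<Rightarrow> ('v \<Rightarrow> 'v)" where
  "wd l = foldr (\<lambda>a f. root_refl a \<circ> f) l id"

lemma wd_Nil[simp]: "wd [] = id" and wd_Cons[simp]: "wd (a # l) = root_refl a \<circ> wd l"
  by (simp_all add: wd_def)

lemma wd_append: "wd (l1 @ l2) = wd l1 \<circ> wd l2"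
  by (induction l1) (auto simp: comp_assoc)

lemma wd_orth: "0 \<notin> set l \<Longrightarrow> orthogonal_transformation (wd l)"
  by (induction l) (auto simp: id_def intro!: orthogonal_transformation_compose rr_orth)

context rs begin

lemma gS_words: "u \<in> gen_group S \<Longrightarrow> \<exists>l. set l \<subseteq> S \<and> u = wd l"
proof (induction rule: gen_group.induct)
  case gen_id then show ?case by (metis empty_subsetI list.set(1) wd_Nil)
next
  case (gen_step a u)
  then obtain l where "set l \<subseteq> S" "u = wd l" by blast
  then show ?case using gen_step by (metis insert_subset list.simps(15) wd_Cons)
qed

lemma wd_orthS: "set l \<subseteq> S \<Longrightarrow> orthogonal_transformation (wd l)"
  using wd_orth nz S_sub P_sub by blast

lemma deletion:
  assumes "set l \<subseteq> S" "\<beta> \<in> S" "wd l \<beta> \<notin> P"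
  shows "\<exists>l'. set l' \<subseteq> S \<and> length l' + 1 = length l \<and> wd l = wd l' \<circ> root_refl \<beta>"
  using assms
proof (induction l)
  case Nil then show ?case using S_sub by auto
next
  case (Cons \<alpha> l)
  have al: "\<alpha> \<in> S" and lS: "set l \<subseteq> S" using Cons.prems by auto
  show ?case
  proof (cases "wd l \<beta> \<in> P")
    case False
    then obtain l' where l': "set l' \<subseteq> S" "length l' + 1 = length l" "wd l = wd l' \<circ> root_refl \<beta>"
      using Cons lS by blast
    show ?thesis
      by (rule exI[of _ "\<alpha> # l'"]) (use l' al in \<open>auto simp: comp_assoc\<close>)
  next
    case True
    have "root_refl \<alpha> (wd l \<beta>) \<notin> P" using Cons.prems by simp
    then have eq: "wd l \<beta> = \<alpha>" using refl_pos[OF al True] by blast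
    have "wd (\<alpha> # l) = wd l \<circ> root_refl \<beta>"
    proof
      fix v
      have "wd l (root_refl \<beta> v) = root_refl (wd l \<beta>) (wd l v)"
        by (rule rr_conj[OF wd_orthS[OF lS]])
      then show "wd (\<alpha> # l) v = (wd l \<circ> root_refl \<beta>) v" by (simp add: eq)
    qed
    then show ?thesis using lS by auto
  qed
qed

lemma U_words: "set l \<subseteq> S \<Longrightarrow> \<forall>a\<in>P. wd l a \<in> P \<Longrightarrow> wd l = id"
proof (induction "length l" arbitrary: l rule: less_induct)
  case less
  show ?case
  proof (cases l rule: rev_exhaust)
    case Nil then show ?thesis by simp
  next
    case (snoc l0 \<beta>)
    have l0S: "set l0 \<subseteq> S" and b: "\<beta> \<in> S" using less.prems snoc by auto
    have bP: "\<beta> \<in> P" using b S_sub by auto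
    have b0: "\<beta> \<noteq> 0" using bP P_sub nz' by auto
    have wl: "wd l = wd l0 \<circ> root_refl \<beta>" using snoc by (simp add: wd_append)
    have lin: "linear (wd l0)" using wd_orthS[OF l0S] orthogonal_transformation_linear by blast
    have "wd l \<beta> = - wd l0 \<beta>" using wl rr_self[OF b0] linear_neg[OF lin] by simp
    then have "- wd l0 \<beta> \<in> P" using less.prems(2) bP by metis
    then have "wd l0 \<beta> \<notin> P" using notboth by blast
    then obtain l' where l': "set l' \<subseteq> S" "length l' + 1 = length l0" "wd l0 = wd l' \<circ> root_refl \<beta>"
      using deletion[OF l0S b] by blast
    have "wd l = wd l'" using wl l'(3) rr_invol[OF b0] by (auto simp: fun_eq_iff)
    moreover have "length l' < length l" using l' snoc by simp
    ultimately show ?thesis using less.hyps l'(1) less.prems(2) by metis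
  qed
qed

lemma U: "y \<in> W \<Longrightarrow> \<forall>a\<in>P. y a \<in> P \<Longrightarrow> y = id"
  using gS_words[OF W_sub] U_words by blast

end



context rs begin

abbreviation "C \<equiv> dominant_chamber Phi xi"

lemma inC: "q \<in> C \<longleftrightarrow> (\<forall>a\<in>P. a \<bullet> q > 0)" by (simp add: dominant_chamber_def)

lemma S_nz: "\<alpha> \<in> S \<Longrightarrow> \<alpha> \<noteq> 0" and S_Phi: "\<alpha> \<in> S \<Longrightarrow> \<alpha> \<in> Phi"
  using S_sub P_sub nz' by auto

lemma refl_alpha_notP: "\<alpha> \<in> S \<Longrightarrow> a \<in> P \<Longrightarrow> root_refl \<alpha> a \<noteq> \<alpha>"
  by (metis S_nz S_sub notboth rr_invol rr_self subsetD)

lemma card_shift: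
  assumes al: "\<alpha> \<in> S" and q: "Q \<alpha>"
  shows "card {a\<in>P. a \<noteq> \<alpha> \<and> Q (root_refl \<alpha> a)} = card {a\<in>P. Q a} - 1"
proof -
  have a0: "\<alpha> \<noteq> 0" using S_nz al by auto
  have eq: "{a\<in>P. a \<noteq> \<alpha> \<and> Q (root_refl \<alpha> a)} = root_refl \<alpha> ` {b\<in>P. b \<noteq> \<alpha> \<and> Q b}"
  proof (intro equalityI subsetI)
    fix a assume a: "a \<in> {a\<in>P. a \<noteq> \<alpha> \<and> Q (root_refl \<alpha> a)}"
    then have "root_refl \<alpha> a \<in> {b\<in>P. b \<noteq> \<alpha> \<and> Q b}"
      using refl_pos[OF al] refl_alpha_notP[OF al] by auto
    moreover have "a = root_refl \<alpha> (root_refl \<alpha> a)" using rr_invol[OF a0] by simp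
    ultimately show "a \<in> root_refl \<alpha> ` {b\<in>P. b \<noteq> \<alpha> \<and> Q b}" by blast
  next
    fix a assume "a \<in> root_refl \<alpha> ` {b\<in>P. b \<noteq> \<alpha> \<and> Q b}"
    then obtain b where b: "b \<in> P" "b \<noteq> \<alpha>" "Q b" "a = root_refl \<alpha> b" by blast
    then show "a \<in> {a\<in>P. a \<noteq> \<alpha> \<and> Q (root_refl \<alpha> a)}"
      using refl_pos[OF al] refl_alpha_notP[OF al] rr_invol[OF a0] by auto
  qed
  have inj: "inj (root_refl \<alpha>)" using rr_orth[OF a0] orthogonal_transformation_inj by blast
  have "card {a\<in>P. a \<noteq> \<alpha> \<and> Q (root_refl \<alpha> a)} = card {b\<in>P. b \<noteq> \<alpha> \<and> Q b}"
    unfolding eq by (rule card_image) (use inj in \<open>auto simp: inj_on_def\<close>)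
  also have "{b\<in>P. b \<noteq> \<alpha> \<and> Q b} = {b\<in>P. Q b} - {\<alpha>}" by auto
  also have "card \<dots> = card {b\<in>P. Q b} - 1"
    using al q S_sub by (subst card_Diff_singleton) auto
  finally show ?thesis .
qed

lemma W_lin: "y \<in> W \<Longrightarrow> linear y"
  using W_orth orthogonal_transformation_linear by blast

lemma pos_from_simple:
  assumes y: "y \<in> W" and h: "\<forall>\<alpha>\<in>S. y \<alpha> \<in> P" and a: "a \<in> P"
  shows "y a \<in> P"
proof -
  obtain c where c: "\<forall>s\<in>S. c s \<ge> 0" "a = (\<Sum>s\<in>S. c s *\<^sub>R s)" using nonneg_comb[OF a] by blast
  have "y a = (\<Sum>s\<in>S. c s *\<^sub>R y s)"
    using W_lin[OF y] by (simp add: c(2) linear_sum linear_scale)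
  then have "y a \<bullet> xi = (\<Sum>s\<in>S. c s * (y s \<bullet> xi))" by (simp add: inner_sum_left)
  also have "\<dots> \<le> 0"
  proof (intro sum_nonpos)
    fix s assume "s \<in> S"
    then show "c s * (y s \<bullet> xi) \<le> 0"
      using c(1) h by (intro mult_nonneg_nonpos) (auto simp: inP less_imp_le)
  qed
  finally have "y a \<bullet> xi \<le> 0" .
  moreover have "y a \<in> Phi" using W_Phi[OF y] a P_sub by auto
  ultimately show ?thesis using reg by (auto simp: inP order_le_less)
qed

lemma posvec_from_simple:
  assumes r: "\<forall>a\<in>Phi. a \<bullet> p \<noteq> 0" and h: "\<forall>\<alpha>\<in>S. \<alpha> \<bullet> p \<ge> 0" and a: "a \<in> P"
  shows "a \<bullet> p > 0"
proof -
  obtain c where c: "\<forall>s\<in>S. c s \<ge> 0" "a = (\<Sum>s\<in>S. c s *\<^sub>R s)" using nonneg_comb[OF a] by blast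
  have "a \<bullet> p = (\<Sum>s\<in>S. c s * (s \<bullet> p))" by (subst c(2)) (simp add: inner_sum_left)
  also have "\<dots> \<ge> 0" using c(1) h by (intro sum_nonneg) auto
  finally show ?thesis using r a P_sub by (auto simp: order_le_less)
qed


lemma simple_in_J:
  assumes J: "J \<subseteq> S" and al: "\<alpha> \<in> S" and sp: "\<alpha> \<in> span J"
  shows "\<alpha> \<in> J"
proof -
  have fJ: "finite J" using J finS finite_subset by blast
  obtain c where c: "(\<Sum>t\<in>J. c t *\<^sub>R t) = \<alpha>" using sp span_finite[OF fJ] by (metis (no_types, lifting) imageE)
  define u where "u s = (if s \<in> J then c s else 0) - (if s = \<alpha> then 1 else 0)" for s
  have "(\<Sum>s\<in>S. u s *\<^sub>R s) = (\<Sum>s\<in>S. if s \<in> J then c s *\<^sub>R s else 0) - (\<Sum>s\<in>S. if s = \<alpha> then s else 0)"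
    by (simp add: u_def scaleR_diff_left sum_subtractf if_distrib[of "\<lambda>x. x *\<^sub>R _"] cong: if_cong)
  also have "(\<Sum>s\<in>S. if s \<in> J then c s *\<^sub>R s else 0) = (\<Sum>t\<in>J. c t *\<^sub>R t)"
  proof -
    have "J \<inter> S = J" using J by blast
    then show ?thesis using finS by (simp add: sum.inter_restrict[symmetric] Int_commute)
  qed
  also have "(\<Sum>s\<in>S. if s = \<alpha> then s else 0) = \<alpha>" using al finS by simp
  finally have "(\<Sum>s\<in>S. u s *\<^sub>R s) = 0" using c by simp
  then have "u \<alpha> = 0" using S_indep al by blast
  then show ?thesis by (auto simp: u_def split: if_splits)
qed

lemma WJ:
  assumes J: "J \<subseteq> S"
  shows "y \<in> W \<Longrightarrow> \<forall>a\<in>P - span J. y a \<in> P \<Longrightarrow> y \<in> gen_group J"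
proof (induction "card {a\<in>P. y a \<notin> P}" arbitrary: y rule: less_induct)
  case less
  show ?case
  proof (cases "\<forall>a\<in>P. y a \<in> P")
    case True
    then have "y = id" using U less.prems by blast
    then show ?thesis by (simp add: gen_group.gen_id)
  next
    case False
    then obtain \<alpha> where al: "\<alpha> \<in> S" "y \<alpha> \<notin> P" using pos_from_simple less.prems by blast
    have alPhi: "\<alpha> \<in> Phi" and a0: "\<alpha> \<noteq> 0" and alP: "\<alpha> \<in> P" using al S_sub P_sub nz' by auto
    have "\<alpha> \<in> span J" using less.prems(2) al alP by blast
    then have alJ: "\<alpha> \<in> J" using simple_in_J[OF J al(1)] by blast
    define y' where "y' = y \<circ> root_refl \<alpha>"
    have y'W: "y' \<in> W" unfolding y'_def using less.prems(1) gg_comp gg_gen alPhi by blast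
    have lin: "linear y" using W_lin less.prems(1) by blast
    have yaPhi: "y \<alpha> \<in> Phi" using W_Phi less.prems(1) alPhi by blast
    have "{a\<in>P. y' a \<notin> P} = {a\<in>P. a \<noteq> \<alpha> \<and> y (root_refl \<alpha> a) \<notin> P}"
    proof -
      have "y' \<alpha> \<in> P" using posneg[OF yaPhi] al(2)
        by (simp add: y'_def rr_self[OF a0] linear_neg[OF lin])
      then show ?thesis by (auto simp: y'_def)
    qed
    also have "card \<dots> = card {a\<in>P. y a \<notin> P} - 1"
      by (rule card_shift[OF al(1)]) (use al in simp)
    finally have cd: "card {a\<in>P. y' a \<notin> P} = card {a\<in>P. y a \<notin> P} - 1" .
    have "card {a\<in>P. y a \<notin> P} > 0" using al alP finP by (auto simp: card_gt_0_iff)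
    then have lt: "card {a\<in>P. y' a \<notin> P} < card {a\<in>P. y a \<notin> P}" using cd by simp
    have h': "\<forall>a\<in>P - span J. y' a \<in> P"
    proof
      fix a assume a: "a \<in> P - span J"
      have ane: "a \<noteq> \<alpha>" using a \<open>\<alpha> \<in> span J\<close> by auto
      have rP: "root_refl \<alpha> a \<in> P" using refl_pos[OF al(1) _ ane] a by blast
      have "root_refl \<alpha> a \<notin> span J"
      proof
        assume "root_refl \<alpha> a \<in> span J"
        then have "root_refl \<alpha> a + (2 * (\<alpha> \<bullet> a) / (\<alpha> \<bullet> \<alpha>)) *\<^sub>R \<alpha> \<in> span J"
          using \<open>\<alpha> \<in> span J\<close> by (intro span_add span_scale) auto
        then show False using a by (simp add: root_refl_def)
      qed
      then show "y' a \<in> P" using less.prems(2) rP by (simp add: y'_def)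
    qed
    have "y' \<in> gen_group J" using less.hyps[OF lt y'W h'] .
    moreover have "y = y' \<circ> root_refl \<alpha>" using rr_invol[OF a0] by (auto simp: y'_def fun_eq_iff)
    ultimately show ?thesis using gg_comp gg_gen alJ by metis
  qed
qed

lemma chamber_exists:
  "\<forall>a\<in>Phi. a \<bullet> p \<noteq> 0 \<Longrightarrow> \<exists>v\<in>W. \<exists>q\<in>C. p = v q"
proof (induction "card {a\<in>P. a \<bullet> p < 0}" arbitrary: p rule: less_induct)
  case less
  show ?case
  proof (cases "\<forall>\<alpha>\<in>S. \<alpha> \<bullet> p \<ge> 0")
    case True
    then have "p \<in> C" using posvec_from_simple less.prems by (auto simp: inC)
    moreover have "p = id p" by simp
    ultimately show ?thesis using gen_group.gen_id[of Phi] by blast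
  next
    case False
    then obtain \<alpha> where al: "\<alpha> \<in> S" "\<alpha> \<bullet> p < 0" by (auto simp: not_le)
    have alPhi: "\<alpha> \<in> Phi" and a0: "\<alpha> \<noteq> 0" and alP: "\<alpha> \<in> P" using al S_sub P_sub nz' by auto
    define p' where "p' = root_refl \<alpha> p"
    have adj: "a \<bullet> p' = root_refl \<alpha> a \<bullet> p" for a by (simp add: p'_def rr_adj[OF a0])
    have r': "\<forall>a\<in>Phi. a \<bullet> p' \<noteq> 0" using adj less.prems rcl alPhi by simp
    have "{a\<in>P. a \<bullet> p' < 0} = {a\<in>P. a \<noteq> \<alpha> \<and> root_refl \<alpha> a \<bullet> p < 0}"
      using al(2) by (auto simp: adj rr_self[OF a0])
    also have "card \<dots> = card {a\<in>P. a \<bullet> p < 0} - 1"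
      by (rule card_shift[OF al(1)]) (use al in simp)
    finally have cd: "card {a\<in>P. a \<bullet> p' < 0} = card {a\<in>P. a \<bullet> p < 0} - 1" .
    have "card {a\<in>P. a \<bullet> p < 0} > 0" using al alP finP by (auto simp: card_gt_0_iff)
    then have lt: "card {a\<in>P. a \<bullet> p' < 0} < card {a\<in>P. a \<bullet> p < 0}" using cd by simp
    obtain v q where vq: "v \<in> W" "q \<in> C" "p' = v q" using less.hyps[OF lt r'] by blast
    have "p = (root_refl \<alpha> \<circ> v) q" using vq(3) rr_invol[OF a0] by (metis comp_apply p'_def)
    moreover have "root_refl \<alpha> \<circ> v \<in> W" using vq alPhi by (simp add: gen_group.gen_step)
    ultimately show ?thesis using vq by blast
  qed
qed

lemma chamber_unique:
  assumes v1: "v1 \<in> W" and v2: "v2 \<in> W" and q1: "q1 \<in> C" and q2: "q2 \<in> C" and e: "v1 q1 = v2 q2"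
  shows "v1 = v2"
proof -
  obtain v2' where v2': "v2' \<in> W" "v2' \<circ> v2 = id" "v2 \<circ> v2' = id" using gg_inv_ex[OF v2] nz by blast
  define y where "y = v2' \<circ> v1"
  have yW: "y \<in> W" using gg_comp v2' v1 by (simp add: y_def)
  have yq: "y q1 = q2" using e v2'(2) by (simp add: y_def pointfree_idE)
  have orth: "orthogonal_transformation y" using W_orth[OF yW] by simp
  have "\<forall>a\<in>P. y a \<in> P"
  proof
    fix a assume a: "a \<in> P"
    have "y a \<bullet> q2 = a \<bullet> q1" using orth yq by (metis orthogonal_transformation_def)
    also have "\<dots> > 0" using q1 a by (simp add: inC)
    finally have pos: "y a \<bullet> q2 > 0" .
    have "y a \<in> Phi" using W_Phi[OF yW] a P_sub by blast
    then show "y a \<in> P"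
      using posneg[of "y a"] q2 pos by (force simp: inC)
  qed
  then have "y = id" using U yW by blast
  then have "v2 \<circ> y = v2" by simp
  moreover have "v2 \<circ> y = v1" using v2'(3) by (simp add: y_def comp_assoc[symmetric])
  ultimately show ?thesis by simp
qed

end



lemma kval_eq:
  assumes "B \<noteq> {}" "\<forall>v\<in>B. of_int k - 1 < a \<bullet> v \<and> a \<bullet> v < of_int k"
  shows "kval a B = k"
  unfolding kval_def
proof (rule the_equality)
  show "\<forall>v\<in>B. of_int k - 1 < a \<bullet> v \<and> a \<bullet> v < of_int k" by fact
next
  fix k' :: int assume h: "\<forall>v\<in>B. of_int k' - 1 < a \<bullet> v \<and> a \<bullet> v < of_int k'"
  obtain v where "v \<in> B" using assms(1) by blast
  then have "of_int k' - 1 < (of_int k :: real)" "of_int k - 1 < (of_int k' :: real)"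
    using h assms(2) by fastforce+
  then have "k' < k + 1" "k < k' + 1" by linarith+
  then show "k' = k" by simp
qed

context rs begin

abbreviation "BA \<equiv> base_alcove Phi xi"

lemma inBA: "v \<in> BA \<longleftrightarrow> (\<forall>a\<in>P. -1 < a \<bullet> v \<and> a \<bullet> v < 0)" by (simp add: base_alcove_def)

lemma BA_ne: "BA \<noteq> {}"
proof -
  define c where "c = 1 + (\<Sum>a\<in>Phi. \<bar>a \<bullet> xi\<bar>)"
  have cpos: "c > 0" unfolding c_def by (smt (verit) sum_nonneg abs_ge_zero)
  have "(1 / c) *\<^sub>R xi \<in> BA"
  proof (unfold inBA, intro ballI conjI)
    fix a assume a: "a \<in> P"
    then have aPhi: "a \<in> Phi" using P_sub by auto
    have neg: "a \<bullet> xi < 0" using a by (simp add: inP)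
    have "\<bar>a \<bullet> xi\<bar> \<le> (\<Sum>a\<in>Phi. \<bar>a \<bullet> xi\<bar>)"
      using member_le_sum[of a Phi "\<lambda>a. \<bar>a \<bullet> xi\<bar>"] aPhi fin by auto
    then have "- c < a \<bullet> xi" unfolding c_def using neg by linarith
    then show "-1 < a \<bullet> ((1 / c) *\<^sub>R xi)" using cpos by (simp add: field_simps)
    show "a \<bullet> ((1 / c) *\<^sub>R xi) < 0" using cpos neg by (simp add: divide_neg_pos)
  qed
  then show ?thesis by blast
qed

lemma kval_BA_pos: "a \<in> P \<Longrightarrow> kval a BA = 0"
  by (rule kval_eq[OF BA_ne]) (auto simp: inBA)

lemma kval_BA_neg: "a \<in> Phi \<Longrightarrow> a \<notin> P \<Longrightarrow> kval a BA = 1"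
proof (rule kval_eq[OF BA_ne], intro ballI)
  fix v assume "a \<in> Phi" "a \<notin> P" "v \<in> BA"
  then have "- a \<in> P" using posneg by blast
  then have "-1 < (- a) \<bullet> v \<and> (- a) \<bullet> v < 0" using \<open>v \<in> BA\<close> unfolding inBA by blast
  then show "of_int 1 - 1 < a \<bullet> v \<and> a \<bullet> v < of_int 1" by simp
qed

lemma alcove_strip:
  assumes X: "translation_lattice Phi X" and l: "l \<in> X" and u: "u \<in> W" and b: "b \<in> Phi"
  shows "\<exists>m::int. \<forall>p\<in>(\<lambda>v. l + u v) ` BA. of_int m - 1 < b \<bullet> p \<and> b \<bullet> p < of_int m"
proof -
  obtain n :: int where n: "b \<bullet> l = of_int n"
    using X l b unfolding translation_lattice_def by (metis Ints_cases)
  obtain u' where u': "u' \<in> W" "u' \<circ> u = id" using gg_inv_ex[OF u] nz by blast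
  have ou': "orthogonal_transformation u'" using W_orth u'(1) by blast
  have adj: "b \<bullet> u v = u' b \<bullet> v" for v
    using ou' u'(2) by (metis orthogonal_transformation_def pointfree_idE)
  have c: "u' b \<in> Phi" using W_Phi u'(1) b by blast
  show ?thesis
  proof (cases "u' b \<in> P")
    case True
    show ?thesis
      by (rule exI[of _ n]) (use True n in \<open>auto simp: inner_add_right adj inBA\<close>)
  next
    case False
    then have nc: "- u' b \<in> P" using posneg c by blast
    show ?thesis
    proof (rule exI[of _ "n + 1"], intro ballI)
      fix p assume "p \<in> (\<lambda>v. l + u v) ` BA"
      then obtain v where v: "v \<in> BA" "p = l + u v" by blast
      have "-1 < (- u' b) \<bullet> v \<and> (- u' b) \<bullet> v < 0" using nc v(1) by (auto simp: inBA)
      then show "of_int (n + 1) - 1 < b \<bullet> p \<and> b \<bullet> p < of_int (n + 1)"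
        using n v(2) by (simp add: inner_add_right adj)
    qed
  qed
qed

end

theorem proposition4p1p1:
  fixes Phi :: "'v::euclidean_space set" and X :: "'v set" and xi :: 'v
    and sig :: "'v \<Rightarrow> 'v" and x :: "'v iw" and J :: "'v set" and w :: "'v \<Rightarrow> 'v"
  assumes "reduced_root_system Phi"
    and "\<forall>a\<in>Phi. a \<bullet> xi \<noteq> 0"
    and "translation_lattice Phi X"
    and "orthogonal_transformation sig" and "sig ` Phi = Phi" and "sig ` X = X"
    and "sig ` base_alcove Phi xi = base_alcove Phi xi"
    and "x \<in> IW Phi X"
    and "\<forall>a\<in>Phi. kval a (iw_act x ` base_alcove Phi xi) \<noteq> kval a (base_alcove Phi xi)"
    and "J \<subseteq> simple_roots Phi xi" and "sig ` J = J"
    and "w \<in> gen_group Phi"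
    and "JW_alcove Phi xi X sig J w x"
  shows "eta_delta Phi xi sig x \<in> gen_group J"
proof -
  interpret rs Phi xi using assms(1,2) by unfold_locales
  note X = assms(3) and osig = assms(4) and shr = assms(9) and JS = assms(10) and sJ = assms(11)
    and wW = assms(12) and JW = assms(13)
  obtain l u where x: "x = (l, u)" "l \<in> X" "u \<in> W" using assms(8) by (auto simp: IW_def)
  define A where "A = iw_act x ` BA"
  have A: "A = (\<lambda>v. l + u v) ` BA" by (simp add: A_def x iw_act_def)
  have Ane: "A \<noteq> {}" using BA_ne A by simp
  have strip: "\<exists>m::int. \<forall>p\<in>A. of_int m - 1 < b \<bullet> p \<and> b \<bullet> p < of_int m" if "b \<in> Phi" for b
    using alcove_strip[OF X x(2) x(3) that] A by simp
  have kvA: "\<forall>p\<in>A. of_int (kval b A) - 1 < b \<bullet> p \<and> b \<bullet> p < of_int (kval b A)" if "b \<in> Phi" for b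
    using strip[OF that] kval_eq[OF Ane] by metis
  have sgn: "b \<bullet> p > 0 \<longleftrightarrow> kval b A \<ge> 1" if "b \<in> Phi" "p \<in> A" for b p
  proof -
    have h: "of_int (kval b A) - 1 < b \<bullet> p" "b \<bullet> p < of_int (kval b A)" using kvA that by auto
    show ?thesis
    proof
      assume "b \<bullet> p > 0" then have "0 < (of_int (kval b A) :: real)" using h by linarith
      then show "kval b A \<ge> 1" by simp
    next
      assume "kval b A \<ge> 1" then have "(1::real) \<le> of_int (kval b A)" by simp
      then show "b \<bullet> p > 0" using h by linarith
    qed
  qed
  have regA: "b \<bullet> p \<noteq> 0" if "b \<in> Phi" "p \<in> A" for b p
  proof -
    have h: "of_int (kval b A) - 1 < b \<bullet> p" "b \<bullet> p < of_int (kval b A)" using kvA that by auto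
    show ?thesis
    proof
      assume "b \<bullet> p = 0"
      then have "0 < (of_int (kval b A) :: real)" "of_int (kval b A) < (1::real)" using h by linarith+
      then have "0 < kval b A" "kval b A < 1" by simp_all
      then show False by linarith
    qed
  qed
  obtain p0 where p0: "p0 \<in> A" using Ane by blast
  obtain v0 q0 where vq: "v0 \<in> W" "q0 \<in> C" "p0 = v0 q0"
    using chamber_exists[of p0] regA p0 by blast
  have ov0: "orthogonal_transformation v0" using W_orth vq(1) by blast
  have bv0: "bij v0" using ov0 orthogonal_transformation_bij by blast
  have inv_adj: "c \<bullet> inv v0 p = v0 c \<bullet> p" for c p
    using ov0 bv0 by (metis bij_inv_eq_iff orthogonal_transformation_def)
  have v0ok: "inv v0 ` A \<subseteq> C"
  proof
    fix q assume "q \<in> inv v0 ` A"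
    then obtain p where p: "p \<in> A" "q = inv v0 p" by blast
    show "q \<in> C" unfolding inC
    proof
      fix a assume a: "a \<in> P"
      have vaPhi: "v0 a \<in> Phi" using W_Phi vq(1) a P_sub by blast
      have "v0 a \<bullet> p0 = a \<bullet> q0" using vq(3) ov0 by (simp add: orthogonal_transformation_def)
      also have "\<dots> > 0" using vq(2) a by (simp add: inC)
      finally have "v0 a \<bullet> p > 0" using sgn[OF vaPhi p0] sgn[OF vaPhi p(1)] by simp
      then show "a \<bullet> q > 0" using p(2) inv_adj by simp
    qed
  qed
  have eta2: "eta2 Phi xi x = v0"
    unfolding eta2_def
  proof (rule the_equality)
    show "v0 \<in> W \<and> inv v0 ` (iw_act x ` BA) \<subseteq> C" using vq(1) v0ok by (simp add: A_def)
  next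
    fix v assume h: "v \<in> W \<and> inv v ` (iw_act x ` BA) \<subseteq> C"
    then have bv: "bij v" using gg_bij nz by blast
    have "inv v p0 \<in> C" using h p0 by (auto simp: A_def)
    moreover have "v (inv v p0) = p0" using bv by (meson bij_inv_eq_iff)
    ultimately show "v = v0" using chamber_unique[of v v0 "inv v p0" q0] h vq by metis
  qed
  have iv0W: "inv v0 \<in> W" using gg_inv vq(1) nz by blast
  define y where "y = inv v0 \<circ> w"
  have yW: "y \<in> W" using gg_comp iv0W wW by (simp add: y_def)
  have "\<forall>b\<in>P - span J. y b \<in> P"
  proof
    fix b assume b: "b \<in> P - span J"
    define a where "a = w b"
    have aPhi: "a \<in> Phi" using W_Phi wW b P_sub by (auto simp: a_def)
    have "a \<in> w ` (P - (sub_roots Phi J \<inter> P))" using b by (auto simp: a_def sub_roots_def)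
    then have ge: "kval a A \<ge> kval a BA" using JW by (auto simp: JW_alcove_def A_def)
    have ne: "kval a A \<noteq> kval a BA" using shr aPhi by (simp add: A_def)
    have "kval a BA \<ge> 0" using kval_BA_pos kval_BA_neg aPhi by (cases "a \<in> P") auto
    then have "kval a A \<ge> 1" using ge ne by linarith
    then have pos: "a \<bullet> p0 > 0" using sgn[OF aPhi p0] by simp
    have cPhi: "inv v0 a \<in> Phi" using W_Phi iv0W aPhi by blast
    have "inv v0 a \<bullet> inv v0 p0 = a \<bullet> p0"
      using inv_adj bv0 by (metis bij_inv_eq_iff)
    then have cpos: "inv v0 a \<bullet> inv v0 p0 > 0" using pos by simp
    have qC: "inv v0 p0 \<in> C" using v0ok p0 by blast
    show "y b \<in> P"
    proof (rule ccontr)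
      assume "y b \<notin> P"
      then have "- inv v0 a \<in> P" using posneg cPhi by (simp add: y_def a_def)
      then have "(- inv v0 a) \<bullet> inv v0 p0 > 0" using qC unfolding inC by blast
      then show False using cpos by simp
    qed
  qed
  then have yJ: "y \<in> gen_group J" using WJ[OF JS yW] by blast
  define j where "j = inv w \<circ> u \<circ> (sig \<circ> w \<circ> inv sig)"
  have jJ: "j \<in> gen_group J"
    using JW by (simp add: j_def JW_alcove_def IW_J_def iw_mult_def delta_IW_def delta_W_def x case_prod_beta)
  have J0: "0 \<notin> J" using JS S_sub P_sub nz by blast
  obtain y' where y': "y' \<in> gen_group J" "y' \<circ> y = id" using gg_inv_ex[OF yJ J0] by blast
  have bsig: "bij sig" using osig orthogonal_transformation_bij by blast
  have bw: "bij w" using gg_bij wW nz by blast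
  have ss1: "sig (inv sig t) = t" for t using bsig by (meson bij_inv_eq_iff)
  have ss2: "inv sig (sig t) = t" for t using bsig by (simp add: bij_is_inj)
  have ww1: "w (inv w t) = t" for t using bw by (meson bij_inv_eq_iff)
  have vv2: "inv v0 (v0 t) = t" for t using bv0 by (simp add: bij_is_inj)
  have y'z: "y' z = inv w (v0 z)" for z
  proof -
    have "y' (y (inv w (v0 z))) = inv w (v0 z)" using y'(2) by (metis comp_apply id_apply)
    moreover have "y (inv w (v0 z)) = z" by (simp add: y_def ww1 vv2)
    ultimately show ?thesis by simp
  qed
  have conj: "inv sig \<circ> g \<circ> sig \<in> gen_group J" if "g \<in> gen_group J" for g
  proof -
    have "inv sig \<circ> g \<circ> inv (inv sig) \<in> gen_group J"
    proof (rule gg_conj[OF that])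
      show "orthogonal_transformation (inv sig)" using orthogonal_transformation_inv[OF osig] .
      show "bij (inv sig)" using bsig by (simp add: bij_imp_bij_inv)
      show "inv sig ` J = J" using sJ bsig by (metis bij_is_inj image_inv_f_f)
    qed
    then show ?thesis using bsig by (simp add: inv_inv_eq)
  qed
  have "eta_delta Phi xi sig x = (inv sig \<circ> y \<circ> sig) \<circ> (inv sig \<circ> j \<circ> sig) \<circ> y'"
  proof
    fix z
    show "eta_delta Phi xi sig x z = ((inv sig \<circ> y \<circ> sig) \<circ> (inv sig \<circ> j \<circ> sig) \<circ> y') z"
      using eta2 by (simp add: eta_delta_def delta_W_inv_def eta1_def x y'z j_def y_def ss1 ss2 ww1)
  qed
  then show ?thesis using conj[OF yJ] conj[OF jJ] y'(1) gg_comp by metis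
qed


end
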